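(* For every integer $n\geq 1$ let $\kappa_n\in(0,1/2)$ be the unique solution in $(0,1/2)$ of $(2+2\kappa)^n\kappa=1$, and let $f_n(x)=x^n(x-2)-2$ and $g_n(x)=x^n(x-2)+2$. Then: (i) the number $2+2\kappa_n$, which is the spectral radius of the matrix $A_n$ described in the context, is a root of $f_n$, and $\kappa_n\sim 2^{-n}$ (i.e. $2^n\kappa_n\to 1$ as $n\to\infty$); (ii) for every $n\geq 5$, $g_n$ has a real root of the form $2-2r_n<2$ (so $r_n>0$), where $r_n\sim\kappa_n$ (i.e. $r_n/\kappa_n\to1$ as $n\to\infty$); (iii) for every $n\geq 1$, all roots of $f_n$ other than $2+2\kappa_n$ and all roots of $g_n$ other than $2-2r_n$ (the latter exclusion only when $n\geq5$) have modulus strictly greater than $1-n^{-1}$; (iv) for every $n\geq 6$, all roots of $f_n$ other than $2+2\kappa_n$ and all roots of $g_n$ other than $2-2r_n$ have modulus strictly less than $1+n^{-1}$.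
   Context: For $\kappa\in(0,1/2)$, the paired tent map $T_\kappa:[-1,1]\to[-1,1]$ is $T_\kappa(x)=2(1+\kappa)(x+1)-1$ for $x\in[-1,-1/2]$, $T_\kappa(x)=-2(1+\kappa)x-1$ for $x\in[-1/2,0)$, $T_\kappa(0)=0$, $T_\kappa(x)=-2(1+\kappa)x+1$ for $x\in(0,1/2]$, $T_\kappa(x)=2(1+\kappa)(x-1)+1$ for $x\in[1/2,1]$. Write $T_n=T_{\kappa_n}$. Let $r_0<r_1<\dots<r_{2n+4}$ be the increasing enumeration of the $2n+5$ distinct points of $\{-1,-1/2,0,1/2,1\}\cup\{T_n^i(\pm\kappa_n):0\le i\le n-1\}$, and $R_i=(r_{i-1},r_i)$ for $1\le i\le 2n+4$. $A_n$ is the $(2n+4)\times(2n+4)$ adjacency matrix with entries $a_{ij}=1$ if $R_i\subset T_n(R_j)$ and $a_{ij}=0$ otherwise. *)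

theory Defs
  imports Complex_Main
begin

definition f_poly :: "nat \<Rightarrow> 'a::comm_ring_1 \<Rightarrow> 'a" where
  "f_poly n x = x ^ n * (x - 2) - 2"

definition g_poly :: "nat \<Rightarrow> 'a::comm_ring_1 \<Rightarrow> 'a" where
  "g_poly n x = x ^ n * (x - 2) + 2"

end

theory Submission
  imports Defs "HOL-Real_Asymp.Real_Asymp"
begin

lemma pow_diff_bound:
  fixes w1 w2 :: complex
  assumes "norm w1 \<le> M" "norm w2 \<le> M"
  shows "norm (w1 ^ Suc n - w2 ^ Suc n) \<le> real (Suc n) * M ^ n * norm (w1 - w2)"
proof (induction n)
  case 0 then show ?case by simp
next
  case (Suc n)
  have M0: "0 \<le> M" using assms(1) norm_ge_zero order_trans by blast
  have eq: "w1 ^ Suc (Suc n) - w2 ^ Suc (Suc n) = w1 * (w1 ^ Suc n - w2 ^ Suc n) + (w1 - w2) * w2 ^ Suc n"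
    by (simp add: algebra_simps)
  have "norm (w1 * (w1 ^ Suc n - w2 ^ Suc n)) \<le> M * (real (Suc n) * M ^ n * norm (w1 - w2))"
    unfolding norm_mult by (rule mult_mono[OF assms(1) Suc]) (use M0 in auto)
  moreover have "norm ((w1 - w2) * w2 ^ Suc n) \<le> norm (w1 - w2) * M ^ Suc n"
    unfolding norm_mult norm_power by (rule mult_left_mono[OF power_mono]) (use assms M0 in auto)
  ultimately have "norm (w1 ^ Suc (Suc n) - w2 ^ Suc (Suc n)) \<le> M * (real (Suc n) * M ^ n * norm (w1 - w2)) + norm (w1 - w2) * M ^ Suc n"
    unfolding eq by (meson add_mono norm_triangle_le)
  also have "\<dots> = real (Suc (Suc n)) * M ^ Suc n * norm (w1 - w2)" by (simp add: algebra_simps)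
  finally show ?case .
qed

lemma binom3:
  fixes x :: real assumes "x \<ge> 0"
  shows "1 + real n * x + real n * (real n - 1) / 2 * x^2 \<le> (1+x)^n"
proof (induction n)
  case 0 then show ?case by simp
next
  case (Suc n)
  have B: "0 \<le> real n * (real n - 1) / 2" by (cases n) auto
  have "(1 + x) * (1 + real n * x + real n * (real n - 1) / 2 * x^2) \<le> (1+x) * (1+x)^n"
    by (rule mult_left_mono[OF Suc]) (use assms in simp)
  moreover have "(1 + x) * (1 + real n * x + real n * (real n - 1) / 2 * x^2) =
     1 + real (Suc n) * x + real (Suc n) * (real (Suc n) - 1) / 2 * x^2 + (real n * (real n - 1) / 2) * x^3"
    by (simp add: field_simps power2_eq_square power3_eq_cube)
  moreover have "0 \<le> (real n * (real n - 1) / 2) * x^3" using B assms by simp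
  ultimately show ?case by simp
qed

lemma rho_bound:
  assumes "n \<ge> 6"
  shows "(1 + 1 / real n) ^ n * (2 - (1 + 1 / real n)) > 2"
proof -
  have n: "real n \<ge> 6" using assms by simp
  have "1 + real n * (1/n) + real n * (real n - 1) / 2 * (1/n)^2 \<le> (1 + 1/real n)^n"
    by (rule binom3) simp
  moreover have "1 + real n * (1/n) + real n * (real n - 1) / 2 * (1/n)^2 = 2 + (real n - 1)/(2 * n)"
    using n by (simp add: field_simps power2_eq_square)
  ultimately have b: "2 + (real n - 1)/(2 * n) \<le> (1 + 1/real n)^n" by simp
  have "2 < (2 + (real n - 1)/(2 * n)) * (2 - (1 + 1 / real n))"
  proof -
    have e: "(2 + (real n - 1)/(2 * n)) * (2 - (1 + 1 / real n)) = (5 * real n - 1) * (real n - 1) / (2 * real n^2)"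
      using n by (simp add: field_simps power2_eq_square)
    have l: "2 * (2 * real n^2) < (5 * real n - 1) * (real n - 1)"
    proof -
      have "6 * real n \<le> real n * real n" using n by (intro mult_right_mono) auto
      moreover have "(5 * real n - 1) * (real n - 1) - 2*(2*real n^2) = real n * real n - 6 * real n + 1"
        by (simp add: algebra_simps power2_eq_square)
      ultimately show ?thesis by linarith
    qed
    have pos: "0 < 2 * real n^2" using n by simp
    show ?thesis unfolding e using l pos by (simp add: pos_less_divide_eq mult.commute)
  qed
  also have "\<dots> \<le> (1 + 1 / real n) ^ n * (2 - (1 + 1 / real n))"
    using b n by (intro mult_right_mono) (auto simp: field_simps)
  finally show ?thesis .
qed

lemma h_mono:
  assumes "n \<ge> 3" "1 \<le> a" "a \<le> b" "b \<le> 3/2"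
  shows "a ^ n * (2 - a) \<le> b ^ n * (2 - (b::real))"
proof (rule DERIV_nonneg_imp_nondecreasing[OF assms(3)])
  fix x assume x: "a \<le> x" "x \<le> b"
  show "\<exists>y. ((\<lambda>x. x ^ n * (2 - x)) has_real_derivative y) (at x) \<and> 0 \<le> y"
  proof (intro exI conjI)
    show "((\<lambda>x. x ^ n * (2 - x)) has_real_derivative (real n * x^(n-1) * (2 - x) - x^n)) (at x)"
      by (auto intro!: derivative_eq_intros)
    have xn: "x ^ n = x^(n-1) * x" using assms(1)
      by (metis Suc_diff_1 less_le_trans numeral_less_iff power_Suc2 semiring_norm(77) zero_less_numeral)
    have p: "0 \<le> x ^ (n-1)" using x assms by simp
    have n3: "3 \<le> real n" using assms(1) by simp
    have "3 * (2 - x) \<le> real n * (2 - x)" using x assms n3 by (intro mult_right_mono) auto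
    moreover have "x \<le> 3 * (2 - x)" using x assms(4) by simp
    ultimately have "x \<le> real n * (2 - x)" by (rule order_trans[rotated])
    then have "x^(n-1) * x \<le> x^(n-1) * (real n * (2 - x))" using p by (rule mult_left_mono)
    then show "0 \<le> real n * x^(n-1) * (2 - x) - x^n" unfolding xn by (simp add: algebra_simps)
  qed
qed


lemma lower_bound:
  fixes z :: complex
  assumes n: "n \<ge> 1" and z: "norm (z ^ n * (z - 2)) = 2"
  shows "1 - 1 / real n < norm z"
proof (rule ccontr)
  assume "\<not> 1 - 1 / real n < norm z"
  then have zle: "norm z \<le> 1 - 1 / real n" by simp
  have nn: "0 \<le> 1 - 1 / real n" using n by simp
  have "1 + (- 1 / real n) \<le> exp (- 1 / real n)" by (rule exp_ge_add_one_self)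
  then have "(1 - 1 / real n) ^ n \<le> exp (- 1 / real n) ^ n" using nn by (intro power_mono) auto
  also have "\<dots> = exp (real n * (- 1 / real n))" by (rule exp_of_nat_mult[symmetric])
  also have "\<dots> = exp (-1)" using n by simp
  also have "\<dots> \<le> 1/2"
  proof -
    have "1 + 1 \<le> exp (1::real)" by (rule exp_ge_add_one_self)
    then show ?thesis by (simp add: exp_minus field_simps)
  qed
  finally have a: "(1 - 1 / real n) ^ n \<le> 1/2" .
  have "norm z ^ n \<le> (1 - 1 / real n) ^ n" using zle by (intro power_mono) auto
  with a have b: "norm z ^ n \<le> 1/2" by simp
  have c: "norm (z - 2) \<le> 3"
  proof -
    have "norm (z - 2) \<le> norm z + norm (2::complex)" by (rule norm_triangle_ineq4)
    moreover have "0 \<le> 1 / real n" by simp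
    moreover have "norm (2::complex) = 2" by simp
    ultimately show ?thesis using zle by linarith
  qed
  have "norm (z ^ n * (z - 2)) = norm z ^ n * norm (z - 2)" by (simp add: norm_mult norm_power)
  also have "\<dots> \<le> 1/2 * 3" using b c by (intro mult_mono) auto
  finally show False using z by simp
qed

lemma big_root:
  fixes z :: complex
  assumes n: "n \<ge> 6" and z: "norm (z ^ n * (z - 2)) = 2" and R: "1 + 1 / real n \<le> norm z"
  shows "3/2 \<le> norm z"
proof (rule ccontr)
  assume "\<not> 3/2 \<le> norm z"
  then have lt: "norm z < 3/2" by simp
  have "norm (2::complex) - norm z \<le> norm (2 - z)" by (rule norm_triangle_ineq2)
  then have d: "2 - norm z \<le> norm (z - 2)" by (simp add: norm_minus_commute)
  have "(1 + 1 / real n) ^ n * (2 - (1 + 1 / real n)) \<le> norm z ^ n * (2 - norm z)"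
    using n R lt by (intro h_mono) auto
  also have "\<dots> \<le> norm z ^ n * norm (z - 2)" using d by (intro mult_left_mono) auto
  also have "\<dots> = 2" using z by (simp add: norm_mult norm_power)
  finally show False using rho_bound[OF n] by simp
qed

lemma nat_K: "n \<ge> 6 \<Longrightarrow> 2 * n * 2 ^ (n+1) < (3::nat) ^ (n+1)"
proof (induction n rule: nat_induct_at_least)
  case base then show ?case by simp
next
  case (Suc n)
  have "2 * Suc n * 2 ^ (Suc n + 1) = 2 * (2 * Suc n * 2 ^ (n + 1))" by simp
  also have "\<dots> \<le> 3 * (2 * n * 2 ^ (n + 1))" using Suc by simp
  also have "\<dots> < 3 * 3 ^ (n+1)" using Suc by simp
  finally show ?case by simp
qed

lemma real_K: assumes "n \<ge> 6" shows "2 * real n * (2/3) ^ (n+1) < 1"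
proof -
  have "real (2 * n * 2 ^ (n+1)) < real ((3::nat) ^ (n+1))" using nat_K[OF assms] by (simp only: of_nat_less_iff)
  then have "2 * real n * 2 ^ (n+1) < 3 ^ (n+1)" by simp
  then show ?thesis by (simp add: power_divide field_simps)
qed

lemma unique_big:
  fixes z1 z2 s :: complex
  assumes n: "n \<ge> 6" and s: "norm s = 2"
    and e1: "z1 ^ n * (z1 - 2) = s" and e2: "z2 ^ n * (z2 - 2) = s"
    and b1: "3/2 \<le> norm z1" and b2: "3/2 \<le> norm z2"
  shows "z1 = z2"
proof -
  have "0 < norm z1" "0 < norm z2" using b1 b2 by linarith+
  then have nz1: "z1 \<noteq> 0" and nz2: "z2 \<noteq> 0" by auto
  define w1 where "w1 = inverse z1"
  define w2 where "w2 = inverse z2"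
  have q1: "z1 - 2 = s * w1 ^ n" using e1 nz1 unfolding w1_def
    by (metis nonzero_eq_divide_eq power_not_zero divide_inverse power_inverse mult.commute)
  have q2: "z2 - 2 = s * w2 ^ n" using e2 nz2 unfolding w2_def
    by (metis nonzero_eq_divide_eq power_not_zero divide_inverse power_inverse mult.commute)
  have d: "z1 - z2 = s * (w1 ^ n - w2 ^ n)"
    using q1 q2 by (simp add: algebra_simps)
  have nw1: "norm w1 \<le> 2/3"
  proof -
    have "norm w1 = 1 / norm z1" unfolding w1_def by (simp add: norm_inverse divide_inverse)
    moreover have "0 < norm z1" using nz1 by simp
    ultimately show ?thesis using b1 by (simp add: divide_le_eq)
  qed
  have nw2: "norm w2 \<le> 2/3"
  proof -
    have "norm w2 = 1 / norm z2" unfolding w2_def by (simp add: norm_inverse divide_inverse)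
    moreover have "0 < norm z2" using nz2 by simp
    ultimately show ?thesis using b2 by (simp add: divide_le_eq)
  qed
  obtain m where m: "n = Suc m" using n by (cases n) auto
  have p: "norm (w1 ^ n - w2 ^ n) \<le> real n * (2/3) ^ m * norm (w1 - w2)"
    unfolding m by (rule pow_diff_bound[OF nw1 nw2])
  have wd: "w1 - w2 = - (w1 * (z1 - z2) * w2)" unfolding w1_def w2_def
    using nz1 nz2 by (simp add: inverse_diff_inverse)
  have "norm (w1 - w2) = norm w1 * norm (z1 - z2) * norm w2" unfolding wd by (simp add: norm_mult)
  also have "\<dots> \<le> (2/3) * norm (z1 - z2) * (2/3)"
    using nw1 nw2 by (intro mult_mono) auto
  finally have wd2: "norm (w1 - w2) \<le> (2/3) * norm (z1 - z2) * (2/3)" .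
  have "norm (z1 - z2) = 2 * norm (w1 ^ n - w2 ^ n)" unfolding d by (simp add: norm_mult s)
  also have "\<dots> \<le> 2 * (real n * (2/3) ^ m * norm (w1 - w2))" using p by simp
  also have "\<dots> \<le> 2 * (real n * (2/3) ^ m * ((2/3) * norm (z1 - z2) * (2/3)))"
    using wd2 by (intro mult_left_mono) auto
  also have "\<dots> = (2 * real n * (2/3) ^ (n+1)) * norm (z1 - z2)" unfolding m by (simp add: algebra_simps)
  finally have "norm (z1 - z2) \<le> (2 * real n * (2/3) ^ (n+1)) * norm (z1 - z2)" .
  with real_K[OF n] have "norm (z1 - z2) \<le> 0"
    by (smt (verit) mult_le_cancel_right1 norm_ge_zero)
  then show ?thesis by simp
qed


lemma lim1: "(\<lambda>n. exp (real n / 2 ^ n)) \<longlonglongrightarrow> 1"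
  by real_asymp

lemma lim2: "(\<lambda>n. 1 - real n * (2/3) ^ n) \<longlonglongrightarrow> (1::real)"
  by real_asymp

lemma g_root_exists:
  assumes n: "n \<ge> 4"
  shows "\<exists>r::real. 0 < r \<and> r < 1/4 \<and> g_poly n (2 - 2 * r) = 0"
proof -
  have "(3/2::real) ^ 4 \<le> (3/2) ^ n" using n by (intro power_increasing) auto
  moreover have "(3/2::real) ^ 4 = 81/16" by (simp add: power_divide)
  ultimately have p: "4 < (3/2::real) ^ n" by linarith
  have a: "g_poly n (3/2::real) \<le> 0" using p by (simp add: g_poly_def)
  have b: "0 \<le> g_poly n (2::real)" by (simp add: g_poly_def)
  have c: "\<forall>x. 3/2 \<le> x \<and> x \<le> 2 \<longrightarrow> isCont (g_poly n :: real \<Rightarrow> real) x"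
    unfolding g_poly_def[abs_def] by (auto intro!: continuous_intros)
  obtain x :: real where x: "3/2 \<le> x" "x \<le> 2" "g_poly n x = 0"
    using IVT[OF a b _ c] by auto
  have "x \<noteq> 3/2"
  proof
    assume "x = 3/2"
    then have "g_poly n (3/2::real) = 0" using x(3) by (simp only:)
    then show False using p by (simp add: g_poly_def)
  qed
  moreover have "x \<noteq> 2" using x(3) by (auto simp: g_poly_def)
  moreover have "2 - 2 * ((2 - x)/2) = x" by (simp add: field_simps)
  ultimately show ?thesis using x by (intro exI[of _ "(2 - x)/2"]) (simp only:, auto)
qed

lemma g_rel:
  fixes r :: real
  assumes "g_poly n (2 - 2 * r) = 0"
  shows "2 ^ n * (1 - r) ^ n * r = 1"
proof -
  have "(2 - 2 * r) ^ n = 2 ^ n * (1 - r) ^ n" by (simp add: power_mult_distrib[symmetric])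
  then show ?thesis using assms by (simp add: g_poly_def algebra_simps)
qed

lemma f_rel:
  fixes k :: real
  assumes "(2 + 2 * k) ^ n * k = 1"
  shows "2 ^ n * (1 + k) ^ n * k = 1"
proof -
  have "(2 + 2 * k) ^ n = 2 ^ n * (1 + k) ^ n" by (simp add: power_mult_distrib[symmetric])
  then show ?thesis using assms by simp
qed

theorem proposition10:
  fixes \<kappa> :: "nat \<Rightarrow> real"
  assumes kappa: "\<And>n. n \<ge> 1 \<Longrightarrow> 0 < \<kappa> n \<and> \<kappa> n < 1/2 \<and> (2 + 2 * \<kappa> n) ^ n * \<kappa> n = 1"
  shows "(\<forall>n\<ge>1. f_poly n (2 + 2 * \<kappa> n) = 0)
    \<and> (\<lambda>n. 2 ^ n * \<kappa> n) \<longlonglongrightarrow> 1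
    \<and> (\<exists>r :: nat \<Rightarrow> real.
          (\<forall>n\<ge>5. 0 < r n \<and> g_poly n (2 - 2 * r n) = 0)
        \<and> (\<lambda>n. r n / \<kappa> n) \<longlonglongrightarrow> 1
        \<and> (\<forall>n\<ge>1. \<forall>z::complex.
              f_poly n z = 0 \<and> z \<noteq> complex_of_real (2 + 2 * \<kappa> n)
                \<longrightarrow> 1 - 1 / real n < norm z)
        \<and> (\<forall>n\<ge>1. \<forall>z::complex.
              g_poly n z = 0 \<and> (n \<ge> 5 \<longrightarrow> z \<noteq> complex_of_real (2 - 2 * r n))
                \<longrightarrow> 1 - 1 / real n < norm z)
        \<and> (\<forall>n\<ge>6. \<forall>z::complex.
              f_poly n z = 0 \<and> z \<noteq> complex_of_real (2 + 2 * \<kappa> n)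
                \<longrightarrow> norm z < 1 + 1 / real n)
        \<and> (\<forall>n\<ge>6. \<forall>z::complex.
              g_poly n z = 0 \<and> z \<noteq> complex_of_real (2 - 2 * r n)
                \<longrightarrow> norm z < 1 + 1 / real n))"
proof -
  define r where "r n = (if n \<ge> 4 then (SOME r. 0 < r \<and> r < 1/4 \<and> g_poly n (2 - 2 * r) = (0::real)) else \<kappa> n)" for n
  have rp: "0 < r n \<and> r n < 1/4 \<and> g_poly n (2 - 2 * r n) = 0" if "n \<ge> 4" for n
    unfolding r_def using that someI_ex[OF g_root_exists[OF that]] by simp
  have fr: "f_poly n (2 + 2 * \<kappa> n) = 0" if "n \<ge> 1" for n
  proof -
    have "(2 + 2 * \<kappa> n) ^ n * \<kappa> n = 1" using kappa[OF that] by simp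
    then show ?thesis by (simp add: f_poly_def algebra_simps)
  qed
  define A where "A n = (1 + \<kappa> n) ^ n" for n
  define B where "B n = (1 - r n) ^ n" for n
  have Arel: "2 ^ n * A n * \<kappa> n = 1" if "n \<ge> 1" for n
    unfolding A_def using f_rel kappa[OF that] by blast
  have Brel: "2 ^ n * B n * r n = 1" if "n \<ge> 4" for n
    unfolding B_def using g_rel rp[OF that] by blast
  have A1: "1 \<le> A n" if "n \<ge> 1" for n
    unfolding A_def using kappa[OF that] by (intro one_le_power) simp
  have Aup: "A n \<le> exp (real n / 2 ^ n)" if "n \<ge> 1" for n
  proof -
    have k0: "0 < \<kappa> n" using kappa[OF that] by simp
    have "2 ^ n * \<kappa> n \<le> 2 ^ n * A n * \<kappa> n"
      using A1[OF that] k0 by (simp add: mult_le_cancel_left1 mult.assoc mult_right_mono)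
    then have kb: "\<kappa> n \<le> 1 / 2 ^ n" using Arel[OF that] by (simp add: field_simps)
    have "A n \<le> exp (\<kappa> n) ^ n" unfolding A_def using k0
      by (intro power_mono) (auto simp: add.commute exp_ge_add_one_self[of "\<kappa> n", simplified add.commute])
    also have "\<dots> = exp (real n * \<kappa> n)" by (rule exp_of_nat_mult[symmetric])
    also have "\<dots> \<le> exp (real n / 2 ^ n)" using kb by (simp add: divide_inverse mult_left_mono)
    finally show ?thesis .
  qed
  have Alim: "A \<longlonglongrightarrow> 1"
  proof (rule tendsto_sandwich[OF _ _ tendsto_const lim1])
    show "eventually (\<lambda>n. 1 \<le> A n) sequentially" using A1 eventually_at_top_linorder by blast
    show "eventually (\<lambda>n. A n \<le> exp (real n / 2 ^ n)) sequentially" using Aup eventually_at_top_linorder by blast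
  qed
  have B1: "B n \<le> 1" if "n \<ge> 4" for n
    unfolding B_def using rp[OF that] by (intro power_le_one) auto
  have Blow: "1 - real n * (2/3) ^ n \<le> B n" if "n \<ge> 4" for n
  proof -
    have r0: "0 < r n" "r n < 1/4" using rp[OF that] by auto
    have "(3/4) ^ n \<le> B n" unfolding B_def using r0 by (intro power_mono) auto
    then have "2 ^ n * (3/4) ^ n * r n \<le> 2 ^ n * B n * r n" using r0 by (intro mult_right_mono) auto
    also have "\<dots> = 1" by (rule Brel[OF that])
    also have "2 ^ n * (3/4) ^ n = (3/2::real) ^ n" by (simp add: power_mult_distrib[symmetric])
    finally have "(3/2) ^ n * r n \<le> 1" .
    then have rb: "r n \<le> (2/3) ^ n" by (simp add: power_divide field_simps)
    have "1 + real n * (- r n) \<le> (1 + (- r n)) ^ n" using r0 by (intro Bernoulli_inequality) auto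
    then have "1 - real n * r n \<le> B n" unfolding B_def by simp
    moreover have "real n * r n \<le> real n * (2/3) ^ n" using rb by (intro mult_left_mono) auto
    ultimately show ?thesis by linarith
  qed
  have Blim: "B \<longlonglongrightarrow> 1"
  proof (rule tendsto_sandwich[OF _ _ lim2 tendsto_const])
    show "eventually (\<lambda>n. 1 - real n * (2/3) ^ n \<le> B n) sequentially" using Blow eventually_at_top_linorder by blast
    show "eventually (\<lambda>n. B n \<le> 1) sequentially" using B1 eventually_at_top_linorder by blast
  qed
  have part2: "(\<lambda>n. 2 ^ n * \<kappa> n) \<longlonglongrightarrow> 1"
  proof -
    have "(\<lambda>n. 1 / A n) \<longlonglongrightarrow> 1 / 1" by (rule tendsto_divide[OF tendsto_const Alim]) simp
    moreover have "eventually (\<lambda>n. 1 / A n = 2 ^ n * \<kappa> n) sequentially"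
    proof -
      have "1 / A n = 2 ^ n * \<kappa> n" if "n \<ge> 1" for n
        using Arel[OF that] A1[OF that] by (simp add: field_simps)
      then show ?thesis using eventually_at_top_linorder by blast
    qed
    ultimately show ?thesis by (simp add: tendsto_cong)
  qed
  have part3: "(\<lambda>n. r n / \<kappa> n) \<longlonglongrightarrow> 1"
  proof -
    have "(\<lambda>n. A n / B n) \<longlonglongrightarrow> 1 / 1" by (rule tendsto_divide[OF Alim Blim]) simp
    moreover have "eventually (\<lambda>n. A n / B n = r n / \<kappa> n) sequentially"
    proof -
      have "A n / B n = r n / \<kappa> n" if "n \<ge> 4" for n
      proof -
        have n1: "n \<ge> 1" using that by simp
        have a0: "2 ^ n * A n \<noteq> 0" and b0: "2 ^ n * B n \<noteq> 0" using Brel[OF that] Arel[OF n1] by auto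
        have k: "\<kappa> n = 1 / (2 ^ n * A n)" using Arel[OF n1] a0 by (simp add: eq_divide_eq mult.commute)
        have rr: "r n = 1 / (2 ^ n * B n)" using Brel[OF that] b0 by (simp add: eq_divide_eq mult.commute)
        have "r n / \<kappa> n = (2 ^ n * A n) / (2 ^ n * B n)" unfolding k rr using a0 b0 by simp
        then show ?thesis by simp
      qed
      then show ?thesis using eventually_at_top_linorder by blast
    qed
    ultimately show ?thesis by (simp add: tendsto_cong)
  qed
  have fnorm: "norm (z ^ n * (z - 2)) = 2" if "f_poly n z = 0" for n and z :: complex
  proof -
    have "z ^ n * (z - 2) = 2" using that by (simp add: f_poly_def)
    then show ?thesis by simp
  qed
  have gnorm: "norm (z ^ n * (z - 2)) = 2" if "g_poly n z = 0" for n and z :: complex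
  proof -
    have "z ^ n * (z - 2) = -2" using that by (simp add: g_poly_def eq_neg_iff_add_eq_0)
    then show ?thesis by simp
  qed
  have part4: "\<forall>n\<ge>6. \<forall>z::complex. f_poly n z = 0 \<and> z \<noteq> complex_of_real (2 + 2 * \<kappa> n)
                \<longrightarrow> norm z < 1 + 1 / real n"
  proof (intro allI impI)
    fix n :: nat and z :: complex
    assume n: "n \<ge> 6" and hz: "f_poly n z = 0 \<and> z \<noteq> complex_of_real (2 + 2 * \<kappa> n)"
    have n1: "n \<ge> 1" using n by simp
    show "norm z < 1 + 1 / real n"
    proof (rule ccontr)
      assume "\<not> norm z < 1 + 1 / real n"
      then have b: "3/2 \<le> norm z" using big_root[OF n fnorm] hz by simp
      define a where "a = complex_of_real (2 + 2 * \<kappa> n)"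
      have "f_poly n a = complex_of_real (f_poly n (2 + 2 * \<kappa> n))" unfolding a_def f_poly_def by simp
      then have fa: "f_poly n a = 0" using fr[OF n1] by simp
      have ea: "a ^ n * (a - 2) = 2" using fa by (simp add: f_poly_def)
      have ez: "z ^ n * (z - 2) = 2" using hz by (simp add: f_poly_def)
      have "norm a = \<bar>2 + 2 * \<kappa> n\<bar>" unfolding a_def by (rule norm_of_real)
      then have na: "3/2 \<le> norm a" using kappa[OF n1] by simp
      have "z = a" using unique_big[OF n _ ez ea b na] by simp
      then show False using hz a_def by simp
    qed
  qed
  have part5: "\<forall>n\<ge>6. \<forall>z::complex. g_poly n z = 0 \<and> z \<noteq> complex_of_real (2 - 2 * r n)
                \<longrightarrow> norm z < 1 + 1 / real n"
  proof (intro allI impI)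
    fix n :: nat and z :: complex
    assume n: "n \<ge> 6" and hz: "g_poly n z = 0 \<and> z \<noteq> complex_of_real (2 - 2 * r n)"
    have n4: "n \<ge> 4" using n by simp
    show "norm z < 1 + 1 / real n"
    proof (rule ccontr)
      assume "\<not> norm z < 1 + 1 / real n"
      then have b: "3/2 \<le> norm z" using big_root[OF n gnorm] hz by simp
      define a where "a = complex_of_real (2 - 2 * r n)"
      have "g_poly n a = complex_of_real (g_poly n (2 - 2 * r n))" unfolding a_def g_poly_def by simp
      then have ga: "g_poly n a = 0" using rp[OF n4] by simp
      have ea: "a ^ n * (a - 2) = -2" using ga by (simp add: g_poly_def eq_neg_iff_add_eq_0)
      have ez: "z ^ n * (z - 2) = -2" using hz by (simp add: g_poly_def eq_neg_iff_add_eq_0)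
      have "norm a = \<bar>2 - 2 * r n\<bar>" unfolding a_def by (rule norm_of_real)
      then have na: "3/2 \<le> norm a" using rp[OF n4] by simp
      have "z = a" using unique_big[OF n _ ez ea b na] by simp
      then show False using hz a_def by simp
    qed
  qed
  show ?thesis
  proof (intro conjI allI impI exI[of _ r])
    show "\<And>n. 1 \<le> n \<Longrightarrow> f_poly n (2 + 2 * \<kappa> n) = 0" by (rule fr)
    show "(\<lambda>n. 2 ^ n * \<kappa> n) \<longlonglongrightarrow> 1" by (rule part2)
    show "\<And>n. 5 \<le> n \<Longrightarrow> 0 < r n" using rp by simp
    show "\<And>n. 5 \<le> n \<Longrightarrow> g_poly n (2 - 2 * r n) = 0" using rp by simp
    show "(\<lambda>n. r n / \<kappa> n) \<longlonglongrightarrow> 1" by (rule part3)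
  qed (use part4 part5 lower_bound fnorm gnorm in auto)
qed

end
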